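(* Let $R$ be a ring (associative with identity) and let $F$ be a free right $R$-module isomorphic to the direct sum of $\alpha$ copies of $R$, where $\alpha\geq 2$ is a (finite or infinite) cardinal number. Then the endomorphism ring $\mathrm{End}_R(F)$ is 2-clean.
   Context: For a positive integer $n$, an element $a$ of a ring $S$ is called $n$-clean if $a=e+u_1+\cdots+u_n$ for some idempotent $e=e^2\in S$ and units $u_1,\dots,u_n$ of $S$; a ring is $n$-clean if each of its elements is $n$-clean. All rings are associative with identity and modules are unitary. *)

theory Defs
  imports "HOL-Algebra.Ring" "HOL-Algebra.FiniteProduct" "HOL-Library.FuncSet"
begin

definition n_clean_elem :: "nat \<Rightarrow> ('c, 'm) ring_scheme \<Rightarrow> 'c \<Rightarrow> bool" where
  "n_clean_elem n S a \<longleftrightarrow>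
     (\<exists>e \<in> carrier S. e \<otimes>\<^bsub>S\<^esub> e = e \<and>
        (\<exists>u. (\<forall>k<n. u k \<in> Units S) \<and>
             a = e \<oplus>\<^bsub>S\<^esub> (\<Oplus>\<^bsub>S\<^esub>k\<in>{..<n}. u k)))"

definition n_clean_ring :: "nat \<Rightarrow> ('c, 'm) ring_scheme \<Rightarrow> bool" where
  "n_clean_ring n S \<longleftrightarrow> (\<forall>a \<in> carrier S. n_clean_elem n S a)"

text \<open>The free right R-module R^(I): finitely supported functions I -> R,
  with the index set given by the type 'i.\<close>

definition free_mod :: "('i \<Rightarrow> 'a::ring_1) set" where
  "free_mod = {x. finite {i. x i \<noteq> 0}}"

definition is_right_endo :: "(('i \<Rightarrow> 'a::ring_1) \<Rightarrow> ('i \<Rightarrow> 'a)) \<Rightarrow> bool" where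
  "is_right_endo f \<longleftrightarrow>
     (\<forall>x \<in> free_mod. f x \<in> free_mod) \<and>
     (\<forall>x \<in> free_mod. \<forall>y \<in> free_mod. f (\<lambda>i. x i + y i) = (\<lambda>i. f x i + f y i)) \<and>
     (\<forall>x \<in> free_mod. \<forall>r. f (\<lambda>i. x i * r) = (\<lambda>i. f x i * r))"

definition End_ring :: "(('i \<Rightarrow> 'a::ring_1) \<Rightarrow> ('i \<Rightarrow> 'a)) ring" where
  "End_ring =
     \<lparr> carrier = {f. is_right_endo f \<and> f \<in> extensional free_mod},
       mult = (\<lambda>f g. restrict (\<lambda>x. f (g x)) free_mod),
       one = restrict (\<lambda>x. x) free_mod,
       zero = restrict (\<lambda>x. (\<lambda>i. 0)) free_mod,
       add = (\<lambda>f g. restrict (\<lambda>x. (\<lambda>i. f x i + g x i)) free_mod) \<rparr>"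

end

theory Submission
  imports Defs
begin


lemma fm_add: "x \<in> free_mod \<Longrightarrow> y \<in> free_mod \<Longrightarrow> (\<lambda>i. x i + y i) \<in> free_mod"
  unfolding free_mod_def mem_Collect_eq
  by (rule finite_subset[of _ "{i. x i \<noteq> 0} \<union> {i. y i \<noteq> 0}"]) auto

lemma fm_zero: "(\<lambda>i. 0) \<in> free_mod"
  unfolding free_mod_def by simp

lemma fm_neg: "x \<in> free_mod \<Longrightarrow> (\<lambda>i. - x i) \<in> free_mod"
  unfolding free_mod_def by simp

lemma fm_diff: "x \<in> free_mod \<Longrightarrow> y \<in> free_mod \<Longrightarrow> (\<lambda>i. x i - y i) \<in> free_mod"
  unfolding free_mod_def mem_Collect_eq
  by (rule finite_subset[of _ "{i. x i \<noteq> 0} \<union> {i. y i \<noteq> 0}"]) auto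

lemma fm_smul: "x \<in> free_mod \<Longrightarrow> (\<lambda>i. x i * r) \<in> free_mod"
  unfolding free_mod_def mem_Collect_eq
  by (rule finite_subset[of _ "{i. x i \<noteq> 0}"]) auto

definition EndS :: "(('i \<Rightarrow> 'a::ring_1) \<Rightarrow> ('i \<Rightarrow> 'a)) set" where
  "EndS = {f. is_right_endo f \<and> f \<in> extensional free_mod}"

typedef (overloaded) ('i, 'a) endo = "EndS :: (('i \<Rightarrow> 'a::ring_1) \<Rightarrow> ('i \<Rightarrow> 'a)) set"
  morphisms rep abs
proof
  show "restrict (\<lambda>x i. 0) free_mod \<in> EndS"
    unfolding EndS_def is_right_endo_def by (simp add: fm_zero fm_add fm_smul)
qed

lemma rep_in: "rep f \<in> EndS" using rep by blast

lemma rep_fm: "x \<in> free_mod \<Longrightarrow> rep f x \<in> free_mod"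
  using rep_in[of f] unfolding EndS_def is_right_endo_def by blast

lemma rep_add: "x \<in> free_mod \<Longrightarrow> y \<in> free_mod \<Longrightarrow> rep f (\<lambda>i. x i + y i) = (\<lambda>i. rep f x i + rep f y i)"
  using rep_in[of f] unfolding EndS_def is_right_endo_def by blast

lemma rep_smul: "x \<in> free_mod \<Longrightarrow> rep f (\<lambda>i. x i * r) = (\<lambda>i. rep f x i * r)"
  using rep_in[of f] unfolding EndS_def is_right_endo_def by blast

lemma rep_out: "x \<notin> free_mod \<Longrightarrow> rep f x = undefined"
  using rep_in[of f] unfolding EndS_def extensional_def by blast

lemma rep_eqI: "(\<And>x. x \<in> free_mod \<Longrightarrow> rep f x = rep g x) \<Longrightarrow> f = g"
  by (metis rep_inject rep_out ext)

lemma S_zero: "restrict (\<lambda>x i. 0) free_mod \<in> EndS"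
  unfolding EndS_def is_right_endo_def by (simp add: fm_zero fm_add fm_smul)

lemma S_one: "restrict (\<lambda>x. x) free_mod \<in> EndS"
  unfolding EndS_def is_right_endo_def by (simp add: fm_zero fm_add fm_smul)

lemma S_add: "restrict (\<lambda>x i. rep f x i + rep g x i) free_mod \<in> EndS"
  unfolding EndS_def is_right_endo_def
  by (simp add: fm_zero fm_add fm_smul rep_fm rep_add rep_smul algebra_simps)

lemma S_neg: "restrict (\<lambda>x i. - rep f x i) free_mod \<in> EndS"
  unfolding EndS_def is_right_endo_def
  by (simp add: fm_zero fm_add fm_smul fm_neg fm_diff rep_fm rep_add rep_smul algebra_simps)

lemma S_diff: "restrict (\<lambda>x i. rep f x i - rep g x i) free_mod \<in> EndS"
  unfolding EndS_def is_right_endo_def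
  by (simp add: fm_zero fm_add fm_smul fm_neg fm_diff rep_fm rep_add rep_smul algebra_simps)

lemma S_mult: "restrict (\<lambda>x. rep f (rep g x)) free_mod \<in> EndS"
  unfolding EndS_def is_right_endo_def
  by (simp add: fm_zero fm_add fm_smul fm_neg fm_diff rep_fm rep_add rep_smul algebra_simps)

instantiation endo :: (type, ring_1) ring_1
begin
definition "0 = abs (restrict (\<lambda>x i. 0) free_mod)"
definition "1 = abs (restrict (\<lambda>x. x) free_mod)"
definition "f + g = abs (restrict (\<lambda>x i. rep f x i + rep g x i) free_mod)"
definition "- f = abs (restrict (\<lambda>x i. - rep f x i) free_mod)"
definition "f - g = abs (restrict (\<lambda>x i. rep f x i - rep g x i) free_mod)"
definition "f * g = abs (restrict (\<lambda>x. rep f (rep g x)) free_mod)"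

lemma rep_zero: "rep (0::('a,'b) endo) = restrict (\<lambda>x i. 0) free_mod"
  unfolding zero_endo_def using S_zero abs_inverse by blast
lemma rep_one: "rep (1::('a,'b) endo) = restrict (\<lambda>x. x) free_mod"
  unfolding one_endo_def using S_one abs_inverse by blast
lemma rep_plus: "rep (f + g) = restrict (\<lambda>x i. rep f x i + rep g x i) free_mod"
  unfolding plus_endo_def using S_add abs_inverse by blast
lemma rep_uminus: "rep (- f) = restrict (\<lambda>x i. - rep f x i) free_mod"
  unfolding uminus_endo_def using S_neg abs_inverse by blast
lemma rep_minus: "rep (f - g) = restrict (\<lambda>x i. rep f x i - rep g x i) free_mod"
  unfolding minus_endo_def using S_diff abs_inverse by blast
lemma rep_times: "rep (f * g) = restrict (\<lambda>x. rep f (rep g x)) free_mod"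
  unfolding times_endo_def using S_mult abs_inverse by blast

lemmas rep_ops = rep_zero rep_one rep_plus rep_uminus rep_minus rep_times

instance
proof
  fix a b c :: "('a,'b) endo"
  show "a * b * c = a * (b * c)"
    by (rule rep_eqI) (simp add: rep_ops rep_fm)
  show "1 * a = a" by (rule rep_eqI) (simp add: rep_ops rep_fm)
  show "a * 1 = a" by (rule rep_eqI) (simp add: rep_ops rep_fm)
  show "(a + b) * c = a * c + b * c" by (rule rep_eqI) (simp add: rep_ops rep_fm)
  show "a * (b + c) = a * b + a * c" by (rule rep_eqI) (simp add: rep_ops rep_fm rep_add)
  show "a + b + c = a + (b + c)" by (rule rep_eqI) (simp add: rep_ops rep_fm algebra_simps)
  show "a + b = b + a" by (rule rep_eqI) (simp add: rep_ops rep_fm algebra_simps)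
  show "0 + a = a" by (rule rep_eqI) (simp add: rep_ops rep_fm)
  show "- a + a = 0" by (rule rep_eqI) (simp add: rep_ops rep_fm)
  show "a - b = a + - b" by (rule rep_eqI) (simp add: rep_ops rep_fm)
  show "(0::('a,'b) endo) \<noteq> 1"
  proof
    assume h: "(0::('a,'b) endo) = 1"
    define x :: "'a \<Rightarrow> 'b" where "x = (\<lambda>i. if i = undefined then 1 else 0)"
    have xf: "x \<in> free_mod" unfolding free_mod_def x_def mem_Collect_eq
      by (rule finite_subset[of _ "{undefined}"]) auto
    have "rep (0::('a,'b) endo) x = rep (1::('a,'b) endo) x" using h by simp
    hence "(\<lambda>i. 0) = x" using xf by (simp add: rep_ops)
    hence "(0::'b) = x undefined" by metis
    thus False unfolding x_def by simp
  qed
qed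
end



definition isU :: "'a::ring_1 \<Rightarrow> bool" where
  "isU u \<longleftrightarrow> (\<exists>v. u * v = 1 \<and> v * u = 1)"

lemma isU_I: "u * v = 1 \<Longrightarrow> v * u = 1 \<Longrightarrow> isU u"
  unfolding isU_def by blast

lemma isU_mult: "isU a \<Longrightarrow> isU b \<Longrightarrow> isU (a * b)"
  unfolding isU_def
proof (elim exE conjE)
  fix a' b' assume h: "a * a' = 1" "a' * a = 1" "b * b' = 1" "b' * b = 1"
  have "a * b * (b' * a') = a * (b * b') * a'" by (simp add: mult.assoc)
  moreover have "b' * a' * (a * b) = b' * (a' * a) * b" by (simp add: mult.assoc)
  ultimately show "\<exists>v. a * b * v = 1 \<and> v * (a * b) = 1" using h by auto
qed

lemma isU_nil: "N * N = 0 \<Longrightarrow> isU (1 + N)"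
  by (rule isU_I[of _ "1 - N"]) (simp_all add: algebra_simps)

lemma rA: "(x::'a::semigroup_mult) * y = z \<Longrightarrow> x * (y * w) = z * w"
  by (simp add: mult.assoc[symmetric])

locale blk =
  fixes g r q \<sigma> \<tau> \<alpha> \<beta> :: "'a::ring_1"
  assumes gg: "g * g = g" and rr: "r * r = r" and qq: "q * q = q"
    and gr: "g * r = 0" and rg: "r * g = 0" and gq: "g * q = 0" and qg: "q * g = 0"
    and rq: "r * q = 0" and qr: "q * r = 0"
    and sum: "g + r + q = 1"
    and L_s: "g * \<sigma> = \<sigma>" and R_s: "\<sigma> * q = \<sigma>"
    and L_t: "q * \<tau> = \<tau>" and R_t: "\<tau> * g = \<tau>"
    and L_a: "r * \<alpha> = \<alpha>" and R_a: "\<alpha> * q = \<alpha>"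
    and L_b: "q * \<beta> = \<beta>" and R_b: "\<beta> * r = \<beta>"
    and st: "\<sigma> * \<tau> = g" and ts: "\<tau> * \<sigma> = q" and ab: "\<alpha> * \<beta> = r"
begin

lemmas L_g = gg lemmas R_g = gg lemmas L_r = rr lemmas R_r = rr lemmas L_q = qq lemmas R_q = qq

lemma z_gr: "g * r = 0"
proof -
  have "g * r = (g * g) * (r * r)" by (simp only: R_g L_r)
  also have "\<dots> = g * (g * r) * r" by (simp only: mult.assoc)
  finally show ?thesis by (simp add: gr)
qed

lemma z_gq: "g * q = 0"
proof -
  have "g * q = (g * g) * (q * q)" by (simp only: R_g L_q)
  also have "\<dots> = g * (g * q) * q" by (simp only: mult.assoc)
  finally show ?thesis by (simp add: gq)
qed

lemma z_gt: "g * \<tau> = 0"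
proof -
  have "g * \<tau> = (g * g) * (q * \<tau>)" by (simp only: R_g L_t)
  also have "\<dots> = g * (g * q) * \<tau>" by (simp only: mult.assoc)
  finally show ?thesis by (simp add: gq)
qed

lemma z_ga: "g * \<alpha> = 0"
proof -
  have "g * \<alpha> = (g * g) * (r * \<alpha>)" by (simp only: R_g L_a)
  also have "\<dots> = g * (g * r) * \<alpha>" by (simp only: mult.assoc)
  finally show ?thesis by (simp add: gr)
qed

lemma z_gb: "g * \<beta> = 0"
proof -
  have "g * \<beta> = (g * g) * (q * \<beta>)" by (simp only: R_g L_b)
  also have "\<dots> = g * (g * q) * \<beta>" by (simp only: mult.assoc)
  finally show ?thesis by (simp add: gq)
qed

lemma z_rg: "r * g = 0"
proof -
  have "r * g = (r * r) * (g * g)" by (simp only: R_r L_g)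
  also have "\<dots> = r * (r * g) * g" by (simp only: mult.assoc)
  finally show ?thesis by (simp add: rg)
qed

lemma z_rq: "r * q = 0"
proof -
  have "r * q = (r * r) * (q * q)" by (simp only: R_r L_q)
  also have "\<dots> = r * (r * q) * q" by (simp only: mult.assoc)
  finally show ?thesis by (simp add: rq)
qed

lemma z_rs: "r * \<sigma> = 0"
proof -
  have "r * \<sigma> = (r * r) * (g * \<sigma>)" by (simp only: R_r L_s)
  also have "\<dots> = r * (r * g) * \<sigma>" by (simp only: mult.assoc)
  finally show ?thesis by (simp add: rg)
qed

lemma z_rt: "r * \<tau> = 0"
proof -
  have "r * \<tau> = (r * r) * (q * \<tau>)" by (simp only: R_r L_t)
  also have "\<dots> = r * (r * q) * \<tau>" by (simp only: mult.assoc)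
  finally show ?thesis by (simp add: rq)
qed

lemma z_rb: "r * \<beta> = 0"
proof -
  have "r * \<beta> = (r * r) * (q * \<beta>)" by (simp only: R_r L_b)
  also have "\<dots> = r * (r * q) * \<beta>" by (simp only: mult.assoc)
  finally show ?thesis by (simp add: rq)
qed

lemma z_qg: "q * g = 0"
proof -
  have "q * g = (q * q) * (g * g)" by (simp only: R_q L_g)
  also have "\<dots> = q * (q * g) * g" by (simp only: mult.assoc)
  finally show ?thesis by (simp add: qg)
qed

lemma z_qr: "q * r = 0"
proof -
  have "q * r = (q * q) * (r * r)" by (simp only: R_q L_r)
  also have "\<dots> = q * (q * r) * r" by (simp only: mult.assoc)
  finally show ?thesis by (simp add: qr)
qed

lemma z_qs: "q * \<sigma> = 0"
proof -
  have "q * \<sigma> = (q * q) * (g * \<sigma>)" by (simp only: R_q L_s)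
  also have "\<dots> = q * (q * g) * \<sigma>" by (simp only: mult.assoc)
  finally show ?thesis by (simp add: qg)
qed

lemma z_qa: "q * \<alpha> = 0"
proof -
  have "q * \<alpha> = (q * q) * (r * \<alpha>)" by (simp only: R_q L_a)
  also have "\<dots> = q * (q * r) * \<alpha>" by (simp only: mult.assoc)
  finally show ?thesis by (simp add: qr)
qed

lemma z_sg: "\<sigma> * g = 0"
proof -
  have "\<sigma> * g = (\<sigma> * q) * (g * g)" by (simp only: R_s L_g)
  also have "\<dots> = \<sigma> * (q * g) * g" by (simp only: mult.assoc)
  finally show ?thesis by (simp add: qg)
qed

lemma z_sr: "\<sigma> * r = 0"
proof -
  have "\<sigma> * r = (\<sigma> * q) * (r * r)" by (simp only: R_s L_r)
  also have "\<dots> = \<sigma> * (q * r) * r" by (simp only: mult.assoc)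
  finally show ?thesis by (simp add: qr)
qed

lemma z_ss: "\<sigma> * \<sigma> = 0"
proof -
  have "\<sigma> * \<sigma> = (\<sigma> * q) * (g * \<sigma>)" by (simp only: R_s L_s)
  also have "\<dots> = \<sigma> * (q * g) * \<sigma>" by (simp only: mult.assoc)
  finally show ?thesis by (simp add: qg)
qed

lemma z_sa: "\<sigma> * \<alpha> = 0"
proof -
  have "\<sigma> * \<alpha> = (\<sigma> * q) * (r * \<alpha>)" by (simp only: R_s L_a)
  also have "\<dots> = \<sigma> * (q * r) * \<alpha>" by (simp only: mult.assoc)
  finally show ?thesis by (simp add: qr)
qed

lemma z_tr: "\<tau> * r = 0"
proof -
  have "\<tau> * r = (\<tau> * g) * (r * r)" by (simp only: R_t L_r)
  also have "\<dots> = \<tau> * (g * r) * r" by (simp only: mult.assoc)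
  finally show ?thesis by (simp add: gr)
qed

lemma z_tq: "\<tau> * q = 0"
proof -
  have "\<tau> * q = (\<tau> * g) * (q * q)" by (simp only: R_t L_q)
  also have "\<dots> = \<tau> * (g * q) * q" by (simp only: mult.assoc)
  finally show ?thesis by (simp add: gq)
qed

lemma z_tt: "\<tau> * \<tau> = 0"
proof -
  have "\<tau> * \<tau> = (\<tau> * g) * (q * \<tau>)" by (simp only: R_t L_t)
  also have "\<dots> = \<tau> * (g * q) * \<tau>" by (simp only: mult.assoc)
  finally show ?thesis by (simp add: gq)
qed

lemma z_ta: "\<tau> * \<alpha> = 0"
proof -
  have "\<tau> * \<alpha> = (\<tau> * g) * (r * \<alpha>)" by (simp only: R_t L_a)
  also have "\<dots> = \<tau> * (g * r) * \<alpha>" by (simp only: mult.assoc)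
  finally show ?thesis by (simp add: gr)
qed

lemma z_tb: "\<tau> * \<beta> = 0"
proof -
  have "\<tau> * \<beta> = (\<tau> * g) * (q * \<beta>)" by (simp only: R_t L_b)
  also have "\<dots> = \<tau> * (g * q) * \<beta>" by (simp only: mult.assoc)
  finally show ?thesis by (simp add: gq)
qed

lemma z_ag: "\<alpha> * g = 0"
proof -
  have "\<alpha> * g = (\<alpha> * q) * (g * g)" by (simp only: R_a L_g)
  also have "\<dots> = \<alpha> * (q * g) * g" by (simp only: mult.assoc)
  finally show ?thesis by (simp add: qg)
qed

lemma z_ar: "\<alpha> * r = 0"
proof -
  have "\<alpha> * r = (\<alpha> * q) * (r * r)" by (simp only: R_a L_r)
  also have "\<dots> = \<alpha> * (q * r) * r" by (simp only: mult.assoc)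
  finally show ?thesis by (simp add: qr)
qed

lemma z_as: "\<alpha> * \<sigma> = 0"
proof -
  have "\<alpha> * \<sigma> = (\<alpha> * q) * (g * \<sigma>)" by (simp only: R_a L_s)
  also have "\<dots> = \<alpha> * (q * g) * \<sigma>" by (simp only: mult.assoc)
  finally show ?thesis by (simp add: qg)
qed

lemma z_aa: "\<alpha> * \<alpha> = 0"
proof -
  have "\<alpha> * \<alpha> = (\<alpha> * q) * (r * \<alpha>)" by (simp only: R_a L_a)
  also have "\<dots> = \<alpha> * (q * r) * \<alpha>" by (simp only: mult.assoc)
  finally show ?thesis by (simp add: qr)
qed

lemma z_bg: "\<beta> * g = 0"
proof -
  have "\<beta> * g = (\<beta> * r) * (g * g)" by (simp only: R_b L_g)
  also have "\<dots> = \<beta> * (r * g) * g" by (simp only: mult.assoc)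
  finally show ?thesis by (simp add: rg)
qed

lemma z_bq: "\<beta> * q = 0"
proof -
  have "\<beta> * q = (\<beta> * r) * (q * q)" by (simp only: R_b L_q)
  also have "\<dots> = \<beta> * (r * q) * q" by (simp only: mult.assoc)
  finally show ?thesis by (simp add: rq)
qed

lemma z_bs: "\<beta> * \<sigma> = 0"
proof -
  have "\<beta> * \<sigma> = (\<beta> * r) * (g * \<sigma>)" by (simp only: R_b L_s)
  also have "\<dots> = \<beta> * (r * g) * \<sigma>" by (simp only: mult.assoc)
  finally show ?thesis by (simp add: rg)
qed

lemma z_bt: "\<beta> * \<tau> = 0"
proof -
  have "\<beta> * \<tau> = (\<beta> * r) * (q * \<tau>)" by (simp only: R_b L_t)
  also have "\<dots> = \<beta> * (r * q) * \<tau>" by (simp only: mult.assoc)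
  finally show ?thesis by (simp add: rq)
qed

lemma z_bb: "\<beta> * \<beta> = 0"
proof -
  have "\<beta> * \<beta> = (\<beta> * r) * (q * \<beta>)" by (simp only: R_b L_b)
  also have "\<dots> = \<beta> * (r * q) * \<beta>" by (simp only: mult.assoc)
  finally show ?thesis by (simp add: rq)
qed


lemmas B0 = gg rr qq gr rg gq qg rq qr L_s R_s L_t R_t L_a R_a L_b R_b st ts ab
  z_gt z_ga z_gb z_rs z_rt z_rb z_qs z_qa z_sg z_sr z_ss z_sa z_tr z_tq z_tt z_ta z_tb
  z_ag z_ar z_as z_aa z_bg z_bq z_bs z_bt z_bb
lemmas BA = B0[THEN rA]
lemmas B = B0 BA

lemma D_unit: "isU (g * W * g + r + \<sigma> + \<tau>)"
proof (rule isU_I[of _ "\<sigma> + \<tau> - \<tau> * W * \<sigma> + r"])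
  have "(g * W * g + r + \<sigma> + \<tau>) * (\<sigma> + \<tau> - \<tau> * W * \<sigma> + r) = g + r + q"
    by (simp add: B algebra_simps)
  thus "(g * W * g + r + \<sigma> + \<tau>) * (\<sigma> + \<tau> - \<tau> * W * \<sigma> + r) = 1" using sum by simp
  have "(\<sigma> + \<tau> - \<tau> * W * \<sigma> + r) * (g * W * g + r + \<sigma> + \<tau>) = g + r + q"
    by (simp add: B algebra_simps)
  thus "(\<sigma> + \<tau> - \<tau> * W * \<sigma> + r) * (g * W * g + r + \<sigma> + \<tau>) = 1" using sum by simp
qed

lemma Y_unit: "isU (g * X * g + g * X * r + r * X * g + r + \<sigma> + \<tau>)"
proof -
  have "g * X * g + g * X * r + r * X * g + r + \<sigma> + \<tau> =
    (1 + g * X * r) * (g * (X - X * r * X) * g + r + \<sigma> + \<tau>) * (1 + r * X * g)"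
    by (simp add: B algebra_simps)
  moreover have "isU (1 + g * X * r)" by (rule isU_nil) (simp add: B algebra_simps)
  moreover have "isU (1 + r * X * g)" by (rule isU_nil) (simp add: B algebra_simps)
  ultimately show ?thesis using D_unit isU_mult by metis
qed

definition "P = 1 - r - \<sigma> * \<beta> * \<alpha> * \<tau> + \<sigma> * \<beta> + \<alpha> * \<tau>"

lemma PP: "P * P = 1"
  unfolding P_def by (simp add: B algebra_simps)

lemma V_unit: "isU ((1 + r * T * r * (\<alpha> * \<tau>)) * P)"
proof -
  have "isU (1 + r * T * r * (\<alpha> * \<tau>))" by (rule isU_nil) (simp add: B algebra_simps)
  moreover have "isU P" using PP by (metis isU_I)
  ultimately show ?thesis using isU_mult by metis
qed

lemma V_eq: "(1 + r * T * r * (\<alpha> * \<tau>)) * P = q + (g - \<sigma> * \<beta> * \<alpha> * \<tau> + r * T * r + \<sigma> * \<beta> + \<alpha> * \<tau>)"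
proof -
  have "(1 + r * T * r * (\<alpha> * \<tau>)) * P = 1 - r - \<sigma> * \<beta> * \<alpha> * \<tau> + \<sigma> * \<beta> + \<alpha> * \<tau> + r * T * r"
    unfolding P_def by (simp add: B algebra_simps)
  also have "\<dots> = (g + r + q) - r - \<sigma> * \<beta> * \<alpha> * \<tau> + \<sigma> * \<beta> + \<alpha> * \<tau> + r * T * r"
    using sum by simp
  finally show ?thesis by (simp add: algebra_simps)
qed

lemma V_inv: "(P * (1 - r * T * r * (\<alpha> * \<tau>))) * ((1 + r * T * r * (\<alpha> * \<tau>)) * P) = 1"
proof -
  have "(1 - r * T * r * (\<alpha> * \<tau>)) * (1 + r * T * r * (\<alpha> * \<tau>)) = 1"
    by (simp add: B algebra_simps)
  hence "(P * (1 - r * T * r * (\<alpha> * \<tau>))) * ((1 + r * T * r * (\<alpha> * \<tau>)) * P) = P * P"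
    by (metis mult.assoc mult_1_right)
  thus ?thesis using PP by simp
qed

lemma V_inv_q: "(P * (1 - r * T * r * (\<alpha> * \<tau>))) * q = q"
  unfolding P_def by (simp add: B algebra_simps)

lemma isU_add: "u' * u = 1 \<Longrightarrow> isU u \<Longrightarrow> u' * w = w \<Longrightarrow> w * w = 0 \<Longrightarrow> isU (u + w)"
proof -
  assume h: "u' * u = 1" "isU u" "u' * w = w" "w * w = 0"
  have "u + w = (1 + w * u') * u" using h(1) by (simp add: algebra_simps mult.assoc)
  moreover have "isU (1 + w * u')"
    by (rule isU_nil) (metis h(3,4) mult.assoc mult_zero_left)
  ultimately show ?thesis using h(2) isU_mult by metis
qed

lemma main: "\<exists>e u1 u2. e * e = e \<and> isU u1 \<and> isU u2 \<and> (A::'a) = e + u1 + u2"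
proof -
  define T where "T = A - 1 - 1"
  define V where "V = (1 + r * T * r * (\<alpha> * \<tau>)) * P"
  define v where "v = g - \<sigma> * \<beta> * \<alpha> * \<tau> + r * T * r + \<sigma> * \<beta> + \<alpha> * \<tau>"
  define X where "X = (g + r) * A * (g + r) - g - r - v"
  define \<delta> where "\<delta> = q * A * q - q"
  define u1 where "u1 = (1 + \<delta> * \<tau>) * (X + \<sigma> + \<tau>)"
  define e where "e = g + r + (g + r) * A * q - \<sigma>"
  define w where "w = q * A * (g + r) - \<tau> - \<delta> * \<tau> * X"
  define u2 where "u2 = V + w"
  have Vq: "V = q + v" unfolding V_def v_def by (rule V_eq)
  have Xd: "X = g * X * g + g * X * r + r * X * g + r"
    unfolding X_def v_def T_def by (simp add: B algebra_simps mult_2 mult_2_right)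
  have Xq: "X * q = 0" unfolding X_def v_def by (simp add: B algebra_simps)
  have Xt: "X * \<tau> = 0" by (metis Xq L_t mult.assoc mult_zero_left)
  have Xqw: "X * (q * z) = 0" for z by (metis Xq mult.assoc mult_zero_left)
  have Xtw: "X * (\<tau> * z) = 0" for z by (metis Xt mult.assoc mult_zero_left)
  have U1: "isU u1"
  proof -
    have "isU (1 + \<delta> * \<tau>)" by (rule isU_nil) (simp add: \<delta>_def B algebra_simps)
    moreover have "isU (X + \<sigma> + \<tau>)" using Y_unit[of X] Xd by metis
    ultimately show ?thesis unfolding u1_def using isU_mult by metis
  qed
  have U2: "isU u2"
    unfolding u2_def
  proof (rule isU_add[OF V_inv[of T, folded V_def] V_unit[of T, folded V_def]])
    have wq: "q * w = w" unfolding w_def \<delta>_def by (simp add: B algebra_simps)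
    have "P * (1 - r * T * r * (\<alpha> * \<tau>)) * w = P * (1 - r * T * r * (\<alpha> * \<tau>)) * q * w"
      using wq by (simp add: mult.assoc)
    thus "P * (1 - r * T * r * (\<alpha> * \<tau>)) * w = w" using V_inv_q wq by simp
    show "w * w = 0" unfolding w_def \<delta>_def by (simp add: B Xq Xt Xqw Xtw algebra_simps)
  qed
  have E: "e * e = e" unfolding e_def by (simp add: B algebra_simps)
  have Adec: "A = (g + r + q) * A * (g + r + q)" using sum by simp
  have "e + u1 + u2 = (g + r + q) * A * (g + r + q)"
    unfolding u2_def Vq u1_def e_def w_def \<delta>_def X_def
    by (simp add: B algebra_simps)
  hence "A = e + u1 + u2" using Adec by simp
  thus ?thesis using U1 U2 E by blast
qed

end


definition pf :: "'i set \<Rightarrow> ('i \<Rightarrow> 'i) \<Rightarrow> 'i \<Rightarrow> 'i option" where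
  "pf S f = (\<lambda>i. if i \<in> S then Some (f i) else None)"

definition pmf :: "('i \<Rightarrow> 'i option) \<Rightarrow> ('i \<Rightarrow> 'a) \<Rightarrow> ('i \<Rightarrow> 'a::ring_1)" where
  "pmf \<phi> x = (\<lambda>i. case \<phi> i of None \<Rightarrow> 0 | Some j \<Rightarrow> x j)"

definition pm :: "'i set \<Rightarrow> ('i \<Rightarrow> 'i) \<Rightarrow> ('i, 'a::ring_1) endo" where
  "pm S f = abs (restrict (pmf (pf S f)) free_mod)"

lemma pmf_fm:
  assumes inj: "inj_on f S" and x: "x \<in> free_mod"
  shows "pmf (pf S f) x \<in> free_mod"
proof -
  have fin: "finite {j. x j \<noteq> 0}" using x unfolding free_mod_def by simp
  have "finite (f -` {j. x j \<noteq> 0} \<inter> S)" using finite_vimage_IntI[OF fin inj] .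
  moreover have "{i. pmf (pf S f) x i \<noteq> 0} \<subseteq> f -` {j. x j \<noteq> 0} \<inter> S"
    unfolding pmf_def pf_def by auto
  ultimately have "finite {i. pmf (pf S f) x i \<noteq> 0}" using finite_subset by blast
  thus ?thesis unfolding free_mod_def by simp
qed

lemma S_pm: "inj_on f S \<Longrightarrow> restrict (pmf (pf S f)) free_mod \<in> EndS"
  unfolding EndS_def is_right_endo_def
  by (auto simp: pmf_fm fm_add fm_smul, auto simp: pmf_def pf_def)

lemma rep_pm: "inj_on f S \<Longrightarrow> rep (pm S f :: ('i, 'a::ring_1) endo) = restrict (pmf (pf S f)) free_mod"
  unfolding pm_def using S_pm abs_inverse by blast

lemma pm_mult_eq:
  assumes i1: "inj_on f1 S1" and i2: "inj_on f2 S2" and i3: "inj_on f3 S3"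
    and S: "{i\<in>S1. f1 i \<in> S2} = S3" and F: "\<And>i. i \<in> S3 \<Longrightarrow> f2 (f1 i) = f3 i"
  shows "(pm S1 f1 :: ('i, 'a::ring_1) endo) * pm S2 f2 = pm S3 f3"
proof (rule rep_eqI)
  fix x :: "'i \<Rightarrow> 'a" assume x: "x \<in> free_mod"
  show "rep (pm S1 f1 * pm S2 f2) x = rep (pm S3 f3 :: ('i, 'a) endo) x"
    using x pmf_fm[OF i2 x] S F
    by (auto simp: rep_times rep_pm[OF i1] rep_pm[OF i2] rep_pm[OF i3] pmf_def pf_def)
qed

lemma pm_empty: "(pm {} f :: ('i, 'a::ring_1) endo) = 0"
  by (rule rep_eqI) (simp add: rep_pm rep_zero pmf_def pf_def)

lemma pm_sum:
  assumes "S1 \<inter> S2 = {}" "S1 \<inter> S3 = {}" "S2 \<inter> S3 = {}" "S1 \<union> S2 \<union> S3 = UNIV"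
  shows "(pm S1 id :: ('i, 'a::ring_1) endo) + pm S2 id + pm S3 id = 1"
proof (rule rep_eqI)
  fix x :: "'i \<Rightarrow> 'a" assume x: "x \<in> free_mod"
  have "(\<lambda>i. pmf (pf S1 id) x i + pmf (pf S2 id) x i + pmf (pf S3 id) x i) = x"
  proof
    fix i
    show "pmf (pf S1 id) x i + pmf (pf S2 id) x i + pmf (pf S3 id) x i = x i"
      using assms by (cases "i \<in> S1"; cases "i \<in> S2"; cases "i \<in> S3") (auto simp: pmf_def pf_def)
  qed
  thus "rep (pm S1 id + pm S2 id + pm S3 id :: ('i, 'a) endo) x = rep (1 :: ('i, 'a) endo) x"
    using x by (simp add: rep_plus rep_one rep_pm pmf_fm)
qed

lemma pm_zero_prod:
  assumes "inj_on f1 S1" "inj_on f2 S2" "{i\<in>S1. f1 i \<in> S2} = {}"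
  shows "(pm S1 f1 :: ('i, 'a::ring_1) endo) * pm S2 f2 = 0"
proof -
  have "(pm S1 f1 :: ('i, 'a::ring_1) endo) * pm S2 f2 = pm {} id"
    by (rule pm_mult_eq[OF assms(1,2) _ assms(3)]) auto
  also have "\<dots> = 0" by (rule pm_empty)
  finally show ?thesis .
qed

lemma blk_exists:
  fixes A B :: "'i set"
  assumes AB: "A \<inter> B = {}" "A \<union> B = UNIV" and h: "inj_on h B" "h ` B \<subseteq> A"
    and k: "inj_on k (A - h ` B)" "k ` (A - h ` B) \<subseteq> B"
  shows "\<exists>g r q \<sigma> \<tau> \<alpha> \<beta> :: ('i, 'a::ring_1) endo. blk g r q \<sigma> \<tau> \<alpha> \<beta>"
proof -
  define G where "G = h ` B"
  define R where "R = A - h ` B"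
  have ig: "inj_on id X" for X :: "'i set" by simp
  have isg: "inj_on (inv_into B h) G" unfolding G_def by (simp add: inj_on_inv_into)
  have itt: "inj_on h B" by fact
  have ia: "inj_on k R" using k unfolding R_def by simp
  have ib: "inj_on (inv_into R k) (k ` R)" by (simp add: inj_on_inv_into)
  have hB: "inv_into B h i \<in> B" if "i \<in> G" for i using that unfolding G_def by (simp add: inv_into_into)
  have hh: "h (inv_into B h i) = i" if "i \<in> G" for i using that unfolding G_def by (simp add: f_inv_into_f)
  have hh2: "inv_into B h (h i) = i" if "i \<in> B" for i using that h by (simp add: inv_into_f_f)
  have kR: "inv_into R k i \<in> R" if "i \<in> k ` R" for i using that by (simp add: inv_into_into)
  have kk2: "inv_into R k (k i) = i" if "i \<in> R" for i using that ia by (simp add: inv_into_f_f)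
  have kB: "k i \<in> B" if "i \<in> R" for i using that k unfolding R_def by auto
  have kRB: "k ` R \<subseteq> B" using k unfolding R_def by auto
  have GA: "G \<subseteq> A" using h unfolding G_def by auto
  have hG: "h i \<in> G" if "i \<in> B" for i using that unfolding G_def by auto
  have RA: "R \<subseteq> A" unfolding R_def by auto
  have GR: "G \<inter> R = {}" unfolding G_def R_def by auto
  have GB: "G \<inter> B = {}" using GA AB by auto
  have RB: "R \<inter> B = {}" using RA AB by auto
  have U: "G \<union> R \<union> B = UNIV" using AB GA unfolding G_def R_def by auto
  define g :: "('i, 'a) endo" where "g = pm G id"
  define r :: "('i, 'a) endo" where "r = pm R id"
  define q :: "('i, 'a) endo" where "q = pm B id"
  define s :: "('i, 'a) endo" where "s = pm G (inv_into B h)"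
  define t :: "('i, 'a) endo" where "t = pm B h"
  define a :: "('i, 'a) endo" where "a = pm R k"
  define b :: "('i, 'a) endo" where "b = pm (k ` R) (inv_into R k)"
  have "blk g r q s t a b"
    unfolding blk_def g_def r_def q_def s_def t_def a_def b_def
    using GR GB RB U hB hh hh2 kR kk2 kB kRB hG
    apply (intro conjI)
    apply (rule pm_mult_eq[OF ig ig ig]; auto)
    apply (rule pm_mult_eq[OF ig ig ig]; auto)
    apply (rule pm_mult_eq[OF ig ig ig]; auto)
    apply (rule pm_zero_prod[OF ig ig]; auto)
    apply (rule pm_zero_prod[OF ig ig]; auto)
    apply (rule pm_zero_prod[OF ig ig]; auto)
    apply (rule pm_zero_prod[OF ig ig]; auto)
    apply (rule pm_zero_prod[OF ig ig]; auto)
    apply (rule pm_zero_prod[OF ig ig]; auto)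
    apply (rule pm_sum; auto)
    apply (rule pm_mult_eq[OF ig isg isg]; auto)
    apply (rule pm_mult_eq[OF isg ig isg]; auto)
    apply (rule pm_mult_eq[OF ig itt itt]; auto)
    apply (rule pm_mult_eq[OF itt ig itt]; auto)
    apply (rule pm_mult_eq[OF ig ia ia]; auto)
    apply (rule pm_mult_eq[OF ia ig ia]; auto)
    apply (rule pm_mult_eq[OF ig ib ib]; auto)
    apply (rule pm_mult_eq[OF ib ig ib]; auto)
    apply (rule pm_mult_eq[OF isg itt ig]; auto)
    apply (rule pm_mult_eq[OF itt isg ig]; auto)
    apply (rule pm_mult_eq[OF ia ib ig]; auto)
    done
  thus ?thesis by blast
qed



lemma fin_part:
  "finite S \<Longrightarrow> \<exists>A B h a. A \<inter> B = {} \<and> A \<union> B = S \<and> inj_on h B \<and> h ` B \<subseteq> A \<and> A - h ` B \<subseteq> {a}"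
proof (induction S rule: finite_induct)
  case empty
  show ?case by auto
next
  case (insert x S)
  then obtain A B h a where H: "A \<inter> B = {}" "A \<union> B = S" "inj_on h B" "h ` B \<subseteq> A" "A - h ` B \<subseteq> {a}"
    by blast
  show ?case
  proof (cases "A - h ` B = {}")
    case True
    have "insert x A \<inter> B = {}" using H insert by auto
    moreover have "insert x A - h ` B \<subseteq> {x}" using True by auto
    ultimately show ?thesis
      apply (rule_tac x="insert x A" in exI, rule_tac x=B in exI, rule_tac x=h in exI, rule_tac x=x in exI)
      using H by auto
  next
    case False
    hence a: "a \<in> A" "a \<notin> h ` B" using H(5) by auto
    have xB: "x \<notin> B" "x \<notin> A" using insert H by auto
    have I: "inj_on (h(x := a)) (insert x B)" using H(3) a xB
      by (auto simp: inj_on_def)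
    have Im: "(h(x := a)) ` (insert x B) \<subseteq> A" using xB H(4) a by auto
    have D: "A - (h(x := a)) ` (insert x B) \<subseteq> {a}" using H(5) xB by auto
    have Dj: "A \<inter> insert x B = {}" using H xB by auto
    have Un: "A \<union> insert x B = insert x S" using H by auto
    show ?thesis using I Im D Dj Un by blast
  qed
qed

lemma partition_exists:
  assumes "\<exists>i j :: 'i. i \<noteq> j"
  shows "\<exists>(A::'i set) B h k. A \<inter> B = {} \<and> A \<union> B = UNIV \<and> inj_on h B \<and> h ` B \<subseteq> A \<and>
     inj_on k (A - h ` B) \<and> k ` (A - h ` B) \<subseteq> B"
proof (cases "finite (UNIV :: 'i set)")
  case True
  then obtain A B h a where H: "A \<inter> B = {}" "A \<union> B = (UNIV::'i set)" "inj_on h B" "h ` B \<subseteq> A" "A - h ` B \<subseteq> {a}"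
    using fin_part[OF True] by (elim exE conjE) simp
  show ?thesis
  proof (cases "B = {}")
    case True
    then have "UNIV \<subseteq> {a}" using H by auto
    then have "\<forall>i j::'i. i = j" by (metis UNIV_I singletonD subsetD)
    thus ?thesis using assms by blast
  next
    case False
    then obtain b where b: "b \<in> B" by blast
    have "inj_on (\<lambda>_. b) (A - h ` B)" using H(5) by (auto simp: inj_on_def)
    moreover have "(\<lambda>_. b) ` (A - h ` B) \<subseteq> B" using b by auto
    ultimately show ?thesis
      apply (rule_tac x=A in exI, rule_tac x=B in exI, rule_tac x=h in exI, rule_tac x="\<lambda>_. b" in exI)
      using H by simp
  qed
next
  case False
  have c: "ordIso2 (card_of ((UNIV::'i set) <+> (UNIV::'i set))) (card_of (UNIV::'i set))"
    by (rule card_of_Plus_infinite1[OF False ordIso_imp_ordLeq[OF card_of_refl]])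
  obtain f where f: "bij_betw f ((UNIV::'i set) <+> (UNIV::'i set)) (UNIV::'i set)"
    using iffD2[OF card_of_ordIso c] by blast
  have bf: "bij f" using f by simp
  have injf: "inj f" using bf by (rule bij_is_inj)
  have surjf: "surj f" using bf by (rule bij_is_surj)
  define A where "A = range (\<lambda>j. f (Inl j))"
  define B where "B = range (\<lambda>j. f (Inr j))"
  define h where "h = (\<lambda>b. f (Inl (case inv_into UNIV f b of Inl j \<Rightarrow> j | Inr j \<Rightarrow> j)))"
  have hfr: "h (f (Inr j)) = f (Inl j)" for j
  proof -
    have "inv_into UNIV f (f (Inr j)) = Inr j" by (rule inv_into_f_f[OF injf UNIV_I])
    thus ?thesis unfolding h_def by simp
  qed
  have D: "A \<inter> B = {}" unfolding A_def B_def by (auto simp: inj_eq[OF injf])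
  have U: "A \<union> B = UNIV"
  proof -
    have "x \<in> A \<union> B" for x
    proof -
      have x: "x = f (inv_into UNIV f x)" using surjf by (simp add: f_inv_into_f)
      show ?thesis
      proof (cases "inv_into UNIV f x")
        case (Inl j) thus ?thesis unfolding A_def using x by auto
      next
        case (Inr j) thus ?thesis unfolding B_def using x by auto
      qed
    qed
    thus ?thesis by auto
  qed
  have I: "inj_on h B" unfolding B_def inj_on_def by (auto simp: hfr inj_eq[OF injf])
  have Im: "h ` B = A" unfolding A_def B_def by (simp add: image_image hfr)
  show ?thesis
    apply (rule exI[of _ A], rule exI[of _ B], rule exI[of _ h], rule exI[of _ id])
    using D U I Im by simp
qed



lemma carrier_End: "carrier (End_ring :: (('i \<Rightarrow> 'a::ring_1) \<Rightarrow> ('i \<Rightarrow> 'a)) ring) = range (rep :: ('i,'a) endo \<Rightarrow> _)"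
  unfolding End_ring_def using type_definition.Rep_range[OF type_definition_endo, symmetric]
  by (simp add: EndS_def)

lemma End_mult: "rep x \<otimes>\<^bsub>End_ring\<^esub> rep y = rep (x * y)"
  by (simp add: End_ring_def rep_times)
lemma End_add: "rep x \<oplus>\<^bsub>End_ring\<^esub> rep y = rep (x + y)"
  by (simp add: End_ring_def rep_plus)
lemma End_zero: "\<zero>\<^bsub>End_ring\<^esub> = rep 0"
  by (simp add: End_ring_def rep_zero)
lemma End_one: "\<one>\<^bsub>End_ring\<^esub> = rep 1"
  by (simp add: End_ring_def rep_one)

lemma End_abelian_monoid: "abelian_monoid (End_ring :: (('i \<Rightarrow> 'a::ring_1) \<Rightarrow> ('i \<Rightarrow> 'a)) ring)"
proof (rule abelian_monoidI)
  show "\<And>x y. x \<in> carrier (End_ring :: (('i \<Rightarrow> 'a::ring_1) \<Rightarrow> ('i \<Rightarrow> 'a)) ring) \<Longrightarrow> y \<in> carrier End_ring \<Longrightarrow> x \<oplus>\<^bsub>End_ring\<^esub> y \<in> carrier End_ring"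
    by (auto simp: carrier_End End_add)
  show "\<zero>\<^bsub>End_ring\<^esub> \<in> carrier (End_ring :: (('i \<Rightarrow> 'a::ring_1) \<Rightarrow> ('i \<Rightarrow> 'a)) ring)"
    by (auto simp: carrier_End End_zero)
  show "\<And>x y z. x \<in> carrier (End_ring :: (('i \<Rightarrow> 'a::ring_1) \<Rightarrow> ('i \<Rightarrow> 'a)) ring) \<Longrightarrow> y \<in> carrier End_ring \<Longrightarrow> z \<in> carrier End_ring \<Longrightarrow> x \<oplus>\<^bsub>End_ring\<^esub> y \<oplus>\<^bsub>End_ring\<^esub> z = x \<oplus>\<^bsub>End_ring\<^esub> (y \<oplus>\<^bsub>End_ring\<^esub> z)"
    by (auto simp: carrier_End End_add add.assoc)
  show "\<And>x. x \<in> carrier (End_ring :: (('i \<Rightarrow> 'a::ring_1) \<Rightarrow> ('i \<Rightarrow> 'a)) ring) \<Longrightarrow> \<zero>\<^bsub>End_ring\<^esub> \<oplus>\<^bsub>End_ring\<^esub> x = x"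
    by (auto simp: carrier_End End_add End_zero)
  show "\<And>x y. x \<in> carrier (End_ring :: (('i \<Rightarrow> 'a::ring_1) \<Rightarrow> ('i \<Rightarrow> 'a)) ring) \<Longrightarrow> y \<in> carrier End_ring \<Longrightarrow> x \<oplus>\<^bsub>End_ring\<^esub> y = y \<oplus>\<^bsub>End_ring\<^esub> x"
    by (auto simp: carrier_End End_add add.commute)
qed

lemma End_Units: "isU u \<Longrightarrow> rep u \<in> Units (End_ring :: (('i \<Rightarrow> 'a::ring_1) \<Rightarrow> ('i \<Rightarrow> 'a)) ring)"
proof -
  assume "isU u"
  then obtain v where v: "u * v = 1" "v * u = 1" unfolding isU_def by blast
  have "rep v \<otimes>\<^bsub>End_ring\<^esub> rep u = \<one>\<^bsub>End_ring\<^esub>" "rep u \<otimes>\<^bsub>End_ring\<^esub> rep v = \<one>\<^bsub>End_ring\<^esub>"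
    using v by (simp_all add: End_mult End_one)
  moreover have "rep v \<in> carrier (End_ring :: (('i \<Rightarrow> 'a::ring_1) \<Rightarrow> ('i \<Rightarrow> 'a)) ring)"
    "rep u \<in> carrier (End_ring :: (('i \<Rightarrow> 'a::ring_1) \<Rightarrow> ('i \<Rightarrow> 'a)) ring)"
    by (simp_all add: carrier_End)
  ultimately show ?thesis unfolding Units_def by blast
qed

theorem theorem7:
  assumes "\<exists>i j :: 'i. i \<noteq> j"
  shows "n_clean_ring 2 (End_ring :: (('i \<Rightarrow> 'a::ring_1) \<Rightarrow> ('i \<Rightarrow> 'a)) ring)"
proof -
  obtain A B :: "'i set" and h k where P: "A \<inter> B = {}" "A \<union> B = UNIV" "inj_on h B" "h ` B \<subseteq> A"
     "inj_on k (A - h ` B)" "k ` (A - h ` B) \<subseteq> B"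
    using partition_exists[OF assms] by (elim exE conjE) simp
  obtain g r q s t a b :: "('i, 'a) endo" where bl: "blk g r q s t a b"
    using blk_exists[OF P] by blast
  interpret am: abelian_monoid "End_ring :: (('i \<Rightarrow> 'a::ring_1) \<Rightarrow> ('i \<Rightarrow> 'a)) ring"
    by (rule End_abelian_monoid)
  show ?thesis
    unfolding n_clean_ring_def n_clean_elem_def
  proof
    fix x assume "x \<in> carrier (End_ring :: (('i \<Rightarrow> 'a::ring_1) \<Rightarrow> ('i \<Rightarrow> 'a)) ring)"
    then obtain X where xX: "x = rep X" by (auto simp: carrier_End)
    obtain e u1 u2 where E: "e * e = e" "isU u1" "isU u2" "X = e + u1 + u2"
      using blk.main[OF bl, of X] by (elim exE conjE) simp
    define u where "u = (\<lambda>k::nat. if k = 0 then rep u1 else rep u2)"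
    have uc: "u \<in> {0, 1} \<rightarrow> carrier End_ring" "u 0 \<in> carrier End_ring" "u 1 \<in> carrier End_ring"
      unfolding u_def by (auto simp: carrier_End)
    have lt: "{..<2::nat} = insert 0 (insert 1 {})" by auto
    have "(\<Oplus>\<^bsub>End_ring\<^esub>k\<in>{..<2}. u k) = u 0 \<oplus>\<^bsub>End_ring\<^esub> (u 1 \<oplus>\<^bsub>End_ring\<^esub> \<zero>\<^bsub>End_ring\<^esub>)"
      unfolding lt using uc by (simp add: am.finsum_insert am.finsum_empty)
    also have "\<dots> = rep (u1 + u2)" unfolding u_def by (simp add: End_zero End_add)
    finally have fs: "(\<Oplus>\<^bsub>End_ring\<^esub>k\<in>{..<2}. u k) = rep (u1 + u2)" .
    have "x = rep e \<oplus>\<^bsub>End_ring\<^esub> (\<Oplus>\<^bsub>End_ring\<^esub>k\<in>{..<2}. u k)"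
      unfolding fs End_add xX E(4) by (simp add: add.assoc)
    moreover have "\<forall>k<2. u k \<in> Units End_ring" unfolding u_def using E End_Units by auto
    moreover have "rep e \<in> carrier End_ring" by (simp add: carrier_End)
    moreover have "rep e \<otimes>\<^bsub>End_ring\<^esub> rep e = rep e" using E(1) by (simp add: End_mult)
    ultimately show "\<exists>e\<in>carrier End_ring. e \<otimes>\<^bsub>End_ring\<^esub> e = e \<and>
         (\<exists>u. (\<forall>k<(2::nat). u k \<in> Units End_ring) \<and> x = e \<oplus>\<^bsub>End_ring\<^esub> (\<Oplus>\<^bsub>End_ring\<^esub>k\<in>{..<(2::nat)}. u k))"
      by blast
  qed
qed


end
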